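(* Let $\{\ket{j}\}_{j=0}^{7}$ be the computational basis of three qubits, where $\ket{j}=\ket{j_1j_2j_3}$ with $j=4j_1+2j_2+j_3$, and let $$\ket{\psi_3}=\frac{1}{4\sqrt{2}}\left(\ket{0}+\ket{1}+\ket{2}+\ket{3}+\ket{4}+\ket{5}+\ket{6}-5\ket{7}\right),\qquad \rho_3=\ket{\psi_3}\bra{\psi_3}.$$ Denote by $A_3,B_3,C_3$ the first, second and third qubits of $\rho_3$. Then $$D(B_3C_3|A_3)=D(A_3C_3|B_3)=D(A_3B_3|C_3)=D(C_3|A_3B_3)=D(B_3|A_3C_3)=D(A_3|B_3C_3)$$ $$=-\tfrac{1}{16}(8+\sqrt{37})\log\left(\tfrac{1}{16}(8+\sqrt{37})\right)-\tfrac{1}{16}(8-\sqrt{37})\log\left(\tfrac{1}{16}(8-\sqrt{37})\right)\approx 0.52,$$ and moreover $D(B_3C_3|A_3)=S(\rho_{A_3})$ and $D(C_3|A_3B_3)=S(\rho_{A_3B_3})$.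
   Context: Logarithms are base 2, and $S(\sigma)=-\mathrm{Tr}(\sigma\log\sigma)$ is the von Neumann entropy; $\rho_{A_3}$ and $\rho_{A_3B_3}$ denote the reduced states of $\rho_3$ on the first qubit and on the first two qubits. For a state $\rho_{XY}$ on a bipartite system $X\otimes Y$ (here $X$ and $Y$ are complementary groups of the three qubits), the quantum discord with measurement on $X$ is $$D(Y|X)=\min_{\{E_a\}}\sum_a p_a S(\rho_{Y|a})+S(\rho_X)-S(\rho_{XY}),$$ where the minimum is over all POVMs $\{E_a\}$ on $X$ ($E_a\ge 0$, $\sum_a E_a=I$), $p_a=\mathrm{Tr}((E_a\otimes I)\rho_{XY})$, $\rho_{Y|a}=\mathrm{Tr}_X((E_a\otimes I)\rho_{XY})/p_a$, and $\rho_X,\rho_Y$ are reduced states. *)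

theory Defs
  imports "Jordan_Normal_Form.Jordan_Normal_Form"
begin

definition mtrace :: "complex mat \<Rightarrow> complex" where
  "mtrace A = (\<Sum>i<dim_row A. A $$ (i,i))"

text \<open>Positive semidefinite d x d complex matrix: the quadratic form v* A v is real and
  nonnegative for every v in C^d (for complex matrices this implies Hermitian).\<close>
definition psd :: "nat \<Rightarrow> complex mat \<Rightarrow> bool" where
  "psd d A \<longleftrightarrow> A \<in> carrier_mat d d \<and>
     (\<forall>v :: nat \<Rightarrow> complex.
        let q = (\<Sum>i<d. \<Sum>j<d. cnj (v i) * A $$ (i,j) * v j) in Im q = 0 \<and> Re q \<ge> 0)"

definition eta :: "real \<Rightarrow> real" where
  "eta x = (if x \<le> 0 then 0 else - x * log 2 x)"

text \<open>Von Neumann entropy S(sigma) = - Tr(sigma log2 sigma) = sum over the eigenvalues of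
  sigma, counted with (algebraic) multiplicity, of - lambda log2 lambda.\<close>
definition vn_entropy :: "complex mat \<Rightarrow> real" where
  "vn_entropy A = (\<Sum>ev\<in>{ev. eigenvalue A ev}. real (order ev (char_poly A)) * eta (Re ev))"

text \<open>Bipartite system X (x) Y of dimensions dX, dY; basis index a*dY + b.\<close>
definition ptrace_Y :: "nat \<Rightarrow> nat \<Rightarrow> complex mat \<Rightarrow> complex mat" where
  "ptrace_Y dX dY R = mat dX dX (\<lambda>(a,a'). \<Sum>b<dY. R $$ (a*dY+b, a'*dY+b))"

definition ptrace_X :: "nat \<Rightarrow> nat \<Rightarrow> complex mat \<Rightarrow> complex mat" where
  "ptrace_X dX dY R = mat dY dY (\<lambda>(b,b'). \<Sum>a<dX. R $$ (a*dY+b, a*dY+b'))"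

text \<open>E (x) I_dY\<close>
definition kron_id :: "nat \<Rightarrow> nat \<Rightarrow> complex mat \<Rightarrow> complex mat" where
  "kron_id dX dY E = mat (dX*dY) (dX*dY)
     (\<lambda>(i,j). if i mod dY = j mod dY then E $$ (i div dY, j div dY) else 0)"

definition is_povm :: "nat \<Rightarrow> nat \<Rightarrow> (nat \<Rightarrow> complex mat) \<Rightarrow> bool" where
  "is_povm d m E \<longleftrightarrow> (\<forall>a<m. psd d (E a)) \<and>
     (\<forall>i<d. \<forall>j<d. (\<Sum>a<m. E a $$ (i,j)) = (if i = j then 1 else 0))"

text \<open>sum_a p_a S(rho_{Y|a}) for the POVM E measured on X.\<close>
definition meas_cond_entropy :: "nat \<Rightarrow> nat \<Rightarrow> complex mat \<Rightarrow> nat \<Rightarrow> (nat \<Rightarrow> complex mat) \<Rightarrow> real" where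
  "meas_cond_entropy dX dY R m E =
     (\<Sum>a<m. let M = kron_id dX dY (E a) * R; p = Re (mtrace M)
             in p * vn_entropy (complex_of_real (1 / p) \<cdot>\<^sub>m ptrace_X dX dY M))"

text \<open>Quantum discord D(Y|X) with measurement on X.\<close>
definition discord :: "nat \<Rightarrow> nat \<Rightarrow> complex mat \<Rightarrow> real" where
  "discord dX dY R =
     (INF mE \<in> {(m, E). is_povm dX m E}. meas_cond_entropy dX dY R (fst mE) (snd mE))
     + vn_entropy (ptrace_Y dX dY R) - vn_entropy R"

text \<open>Qubits are numbered 0 (A, first, weight 4), 1 (B, weight 2), 2 (C, weight 1).
  reorder ord R re-expresses the 3-qubit operator R with the qubits in the order
  ord!0, ord!1, ord!2 (ord!0 becoming the most significant one).\<close>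
definition old_index :: "nat list \<Rightarrow> nat \<Rightarrow> nat" where
  "old_index ord i = (\<Sum>k<3. ((i div 2^(2-k)) mod 2) * 2^(2 - ord!k))"

definition reorder :: "nat list \<Rightarrow> complex mat \<Rightarrow> complex mat" where
  "reorder ord R = mat 8 8 (\<lambda>(i,j). R $$ (old_index ord i, old_index ord j))"

definition psi3 :: "complex vec" where
  "psi3 = vec 8 (\<lambda>j. (if j = 7 then -5 else 1) / (4 * complex_of_real (sqrt 2)))"

definition rho3 :: "complex mat" where
  "rho3 = mat 8 8 (\<lambda>(i,j). psi3 $ i * cnj (psi3 $ j))"

end

theory Submission
  imports Defs
begin
lemma mat_delete_idx: "i' < dim_row A - 1 \<Longrightarrow> j' < dim_col A - 1 \<Longrightarrow> mat_delete A i j $$ (i',j') = A $$ (insert_index i i', insert_index j j')"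
  unfolding mat_delete_def by simp

lemma mat_delete_carrier: "A \<in> carrier_mat (Suc n) (Suc n) \<Longrightarrow> mat_delete A i j \<in> carrier_mat n n"
  unfolding mat_delete_def by auto

lemma det_row0: assumes "A \<in> carrier_mat (Suc n) (Suc n)"
  shows "det A = (\<Sum>j<Suc n. A $$ (0,j) * ((-1)^j * det (mat_delete A 0 j)))"
  by (subst laplace_expansion_row[OF assms, of 0]) (simp_all add: cofactor_def del: sum.lessThan_Suc)

lemma det2: assumes A: "A \<in> carrier_mat 2 2"
  shows "det A = A$$(0,0)*A$$(1,1) - A$$(0,1)*A$$(1,0)"
proof -
  have A': "A \<in> carrier_mat (Suc 1) (Suc 1)" using A by (simp add: eval_nat_numeral)
  have d: "det (mat_delete A 0 j) = A $$ (1, insert_index j 0)" for j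
    using det_single[OF mat_delete_carrier[OF A']] A by (simp add: mat_delete_idx insert_index_def eval_nat_numeral)
  show ?thesis unfolding det_row0[OF A'] d by (simp add: insert_index_def)
qed

lemma det3: assumes A: "A \<in> carrier_mat 3 3"
  shows "det A = A$$(0,0)*(A$$(1,1)*A$$(2,2) - A$$(1,2)*A$$(2,1))
      - A$$(0,1)*(A$$(1,0)*A$$(2,2) - A$$(1,2)*A$$(2,0))
      + A$$(0,2)*(A$$(1,0)*A$$(2,1) - A$$(1,1)*A$$(2,0))"
proof -
  have A': "A \<in> carrier_mat (Suc 2) (Suc 2)" using A by (simp add: eval_nat_numeral)
  have d: "det (mat_delete A 0 j) = A $$ (1, insert_index j 0) * A $$ (2, insert_index j 1) - A $$ (1, insert_index j 1) * A $$ (2, insert_index j 0)" for j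
    using det2[OF mat_delete_carrier[OF A']] A by (simp add: mat_delete_idx insert_index_def eval_nat_numeral)
  show ?thesis unfolding det_row0[OF A'] d by (simp add: insert_index_def eval_nat_numeral algebra_simps)
qed

lemma det4: assumes A: "A \<in> carrier_mat 4 4"
  shows "det A = A$$(0,0)*(A$$(1,1)*(A$$(2,2)*A$$(3,3) - A$$(2,3)*A$$(3,2))
      - A$$(1,2)*(A$$(2,1)*A$$(3,3) - A$$(2,3)*A$$(3,1))
      + A$$(1,3)*(A$$(2,1)*A$$(3,2) - A$$(2,2)*A$$(3,1)))
    - A$$(0,1)*(A$$(1,0)*(A$$(2,2)*A$$(3,3) - A$$(2,3)*A$$(3,2))
      - A$$(1,2)*(A$$(2,0)*A$$(3,3) - A$$(2,3)*A$$(3,0))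
      + A$$(1,3)*(A$$(2,0)*A$$(3,2) - A$$(2,2)*A$$(3,0)))
    + A$$(0,2)*(A$$(1,0)*(A$$(2,1)*A$$(3,3) - A$$(2,3)*A$$(3,1))
      - A$$(1,1)*(A$$(2,0)*A$$(3,3) - A$$(2,3)*A$$(3,0))
      + A$$(1,3)*(A$$(2,0)*A$$(3,1) - A$$(2,1)*A$$(3,0)))
    - A$$(0,3)*(A$$(1,0)*(A$$(2,1)*A$$(3,2) - A$$(2,2)*A$$(3,1))
      - A$$(1,1)*(A$$(2,0)*A$$(3,2) - A$$(2,2)*A$$(3,0))
      + A$$(1,2)*(A$$(2,0)*A$$(3,1) - A$$(2,1)*A$$(3,0)))"
proof -
  have A': "A \<in> carrier_mat (Suc 3) (Suc 3)" using A by (simp add: eval_nat_numeral)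
  have d: "det (mat_delete A 0 j) = 
     A$$(1,insert_index j 0)*(A$$(2,insert_index j 1)*A$$(3,insert_index j 2) - A$$(2,insert_index j 2)*A$$(3,insert_index j 1))
      - A$$(1,insert_index j 1)*(A$$(2,insert_index j 0)*A$$(3,insert_index j 2) - A$$(2,insert_index j 2)*A$$(3,insert_index j 0))
      + A$$(1,insert_index j 2)*(A$$(2,insert_index j 0)*A$$(3,insert_index j 1) - A$$(2,insert_index j 1)*A$$(3,insert_index j 0))" for j
    using det3[OF mat_delete_carrier[OF A']] A by (simp add: mat_delete_idx insert_index_def eval_nat_numeral)
  show ?thesis unfolding det_row0[OF A'] d by (simp add: insert_index_def eval_nat_numeral algebra_simps)
qed

definition sg :: "nat \<Rightarrow> real" where "sg i = (if i = 7 then -5 else 1)"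

lemma psi3_idx: "i < 8 \<Longrightarrow> psi3 $ i = complex_of_real (sg i / (4 * sqrt 2))"
  unfolding psi3_def sg_def by simp

lemma psi_prod: "i < 8 \<Longrightarrow> j < 8 \<Longrightarrow> psi3 $ i * cnj (psi3 $ j) = complex_of_real (sg i * sg j / 32)"
proof -
  assume "i < 8" "j < 8"
  then have "psi3 $ i * cnj (psi3 $ j) = complex_of_real (sg i / (4 * sqrt 2) * (sg j / (4 * sqrt 2)))"
    by (simp only: psi3_idx complex_cnj_complex_of_real of_real_mult)
  also have "sg i / (4 * sqrt 2) * (sg j / (4 * sqrt 2)) = sg i * sg j / 32"
    by (simp add: field_simps)
  finally show ?thesis .
qed

lemma rho3_idx: "i < 8 \<Longrightarrow> j < 8 \<Longrightarrow> rho3 $$ (i,j) = complex_of_real (sg i * sg j / 32)"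
  unfolding rho3_def by (simp add: psi_prod)

lemma rhoA: "ptrace_Y 2 4 rho3 = mat 2 2 (\<lambda>(a,b). if a = b then (if a = 0 then 1/8 else 7/8) else -1/16)"
  apply (rule eq_matI)
  apply (auto simp: ptrace_Y_def)
  apply (auto simp: less_Suc_eq numeral_eq_Suc rho3_idx sg_def)
  done

lemma rhoAB: "ptrace_Y 4 2 rho3 = mat 4 4 (\<lambda>(a,b). if a = 3 \<and> b = 3 then 26/32 else if a = 3 \<or> b = 3 then -4/32 else 2/32)"
  apply (rule eq_matI)
  apply (auto simp: ptrace_Y_def)
  apply (auto simp: less_Suc_eq numeral_eq_Suc rho3_idx sg_def)
  done

definition l1 :: real where "l1 = (8 + sqrt 37) / 16"
definition l2 :: real where "l2 = (8 - sqrt 37) / 16"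

lemma l12_sum: "complex_of_real l1 + complex_of_real l2 = 1"
proof -
  have "l1 + l2 = 1" unfolding l1_def l2_def by (simp add: field_simps)
  then show ?thesis by (metis of_real_add of_real_1)
qed
lemma l12_prod: "complex_of_real l1 * complex_of_real l2 = 27/256"
proof -
  have "l1 * l2 = 27/256" unfolding l1_def l2_def by (simp add: field_simps algebra_simps power2_eq_square[symmetric])
  then show ?thesis by (metis of_real_mult of_real_divide of_real_numeral)
qed

lemma lin_prod: "[:- a, 1:] * [:- b, 1:] = [: a*b, -(a+b), 1:]" for a b :: complex
  by (simp add: algebra_simps)

lemma charA: "char_poly (ptrace_Y 2 4 rho3) = [:- complex_of_real l1, 1:] * [:- complex_of_real l2, 1:]"
proof (rule poly_eq_poly_eq_iff[THEN iffD1], rule ext)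
  fix k :: complex
  let ?A = "ptrace_Y 2 4 rho3"
  have A: "?A \<in> carrier_mat 2 2" unfolding rhoA by simp
  have "poly (char_poly ?A) k = det (- char_matrix ?A k)" by (rule char_poly_matrix[OF A])
  also have "\<dots> = (k - 1/8) * (k - 7/8) - 1/256"
    by (subst det2) (auto simp: rhoA char_matrix_def field_simps)
  also have "\<dots> = k*k - (complex_of_real l1 + complex_of_real l2) * k + complex_of_real l1 * complex_of_real l2"
    unfolding l12_sum l12_prod by (simp add: field_simps)
  also have "\<dots> = poly ([:- complex_of_real l1, 1:] * [:- complex_of_real l2, 1:]) k"
    by (simp add: algebra_simps)
  finally show "poly (char_poly ?A) k = poly ([:- complex_of_real l1, 1:] * [:- complex_of_real l2, 1:]) k" .
qed

lemma charAB: "char_poly (ptrace_Y 4 2 rho3) = [:0, 1:] * [:0, 1:] * ([:- complex_of_real l1, 1:] * [:- complex_of_real l2, 1:])"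
proof (rule poly_eq_poly_eq_iff[THEN iffD1], rule ext)
  fix k :: complex
  let ?A = "ptrace_Y 4 2 rho3"
  have A: "?A \<in> carrier_mat 4 4" unfolding rhoAB by simp
  have "poly (char_poly ?A) k = det (- char_matrix ?A k)" by (rule char_poly_matrix[OF A])
  also have "\<dots> = k * k * (k * k - k + 27/256)"
    by (subst det4) (auto simp: rhoAB char_matrix_def field_simps)
  also have "\<dots> = k * k * (k*k - (complex_of_real l1 + complex_of_real l2) * k + complex_of_real l1 * complex_of_real l2)"
    unfolding l12_sum l12_prod by (simp add: field_simps)
  also have "\<dots> = poly ([:0, 1:] * [:0, 1:] * ([:- complex_of_real l1, 1:] * [:- complex_of_real l2, 1:])) k"
    by (simp add: algebra_simps)
  finally show "poly (char_poly ?A) k = poly ([:0, 1:] * [:0, 1:] * ([:- complex_of_real l1, 1:] * [:- complex_of_real l2, 1:])) k" .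
qed

lemma order_lin: "order a [:- b, 1:] = (if a = b then 1 else 0)" for a b :: complex
proof (cases "a = b")
  case True then show ?thesis using order_power_n_n[of b 1] by simp
next
  case False
  then have "poly [:- b, 1:] a \<noteq> 0" by simp
  then show ?thesis using False by (simp add: order_0I)
qed

lemma sqrt37: "0 < sqrt 37" "sqrt 37 < 8"
proof -
  show "0 < sqrt 37" by simp
  have "sqrt 37 < sqrt (8^2)" by (subst real_sqrt_less_iff) simp
  then show "sqrt 37 < 8" by simp
qed

lemma l_facts: "l1 > 0" "l2 > 0" "l1 \<noteq> l2"
proof -
  show "l1 > 0" unfolding l1_def by (simp add: add_pos_nonneg)
  show "l2 > 0" unfolding l2_def using sqrt37 by simp
  show "l1 \<noteq> l2" unfolding l1_def l2_def using sqrt37 by simp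
qed

lemma l_facts2: "l2 \<noteq> l1" "l1 \<noteq> 0" "l2 \<noteq> 0"
  using l_facts by auto

lemma cl_facts: "complex_of_real l1 \<noteq> complex_of_real l2" "complex_of_real l1 \<noteq> 0" "complex_of_real l2 \<noteq> 0"
  using l_facts by auto

lemma vnA: "vn_entropy (ptrace_Y 2 4 rho3) = eta l1 + eta l2"
proof -
  let ?A = "ptrace_Y 2 4 rho3"
  have A: "?A \<in> carrier_mat 2 2" unfolding rhoA by simp
  have nz: "[:- complex_of_real l1, 1:] * [:- complex_of_real l2, 1:] \<noteq> 0" by simp
  have set: "{ev. eigenvalue ?A ev} = {complex_of_real l1, complex_of_real l2}"
    unfolding eigenvalue_root_char_poly[OF A] charA by (auto simp only: poly_mult poly_pCons poly_0 mult_eq_0_iff; simp)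
  have o1: "order (complex_of_real l1) (char_poly ?A) = 1"
    by (simp only: charA order_mult[OF nz] order_lin) (simp add: cl_facts l_facts l_facts2)
  have o2: "order (complex_of_real l2) (char_poly ?A) = 1"
    by (simp only: charA order_mult[OF nz] order_lin) (simp add: cl_facts l_facts l_facts2)
  have "vn_entropy ?A = (\<Sum>ev\<in>{complex_of_real l1, complex_of_real l2}. real (order ev (char_poly ?A)) * eta (Re ev))"
    by (simp only: vn_entropy_def set)
  also have "\<dots> = real (order (complex_of_real l1) (char_poly ?A)) * eta l1 + real (order (complex_of_real l2) (char_poly ?A)) * eta l2"
    using cl_facts by simp
  finally show ?thesis unfolding o1 o2 by simp
qed

lemma vnAB: "vn_entropy (ptrace_Y 4 2 rho3) = eta l1 + eta l2"
proof -
  let ?A = "ptrace_Y 4 2 rho3"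
  have A: "?A \<in> carrier_mat 4 4" unfolding rhoAB by simp
  have X: "[:0, 1:] = [:- 0, 1::complex:]" by simp
  have nz: "[:- 0, 1:] * [:- 0, 1:] * ([:- complex_of_real l1, 1:] * [:- complex_of_real l2, 1:]) \<noteq> 0" by simp
  have nz2: "[:- 0, 1:] * [:- 0, 1::complex:] \<noteq> 0" by simp
  have nz3: "[:- complex_of_real l1, 1:] * [:- complex_of_real l2, 1:] \<noteq> 0" by simp
  have set: "{ev. eigenvalue ?A ev} = {0, complex_of_real l1, complex_of_real l2}"
    unfolding eigenvalue_root_char_poly[OF A] charAB by (auto simp only: poly_mult poly_pCons poly_0 mult_eq_0_iff; simp)
  have o1: "order (complex_of_real l1) (char_poly ?A) = 1"
    by (simp only: charAB X order_mult[OF nz] order_mult[OF nz2] order_mult[OF nz3] order_lin) (simp add: cl_facts l_facts l_facts2)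
  have o2: "order (complex_of_real l2) (char_poly ?A) = 1"
    by (simp only: charAB X order_mult[OF nz] order_mult[OF nz2] order_mult[OF nz3] order_lin) (simp add: cl_facts l_facts l_facts2)
  have "vn_entropy ?A = (\<Sum>ev\<in>{0, complex_of_real l1, complex_of_real l2}. real (order ev (char_poly ?A)) * eta (Re ev))"
    by (simp only: vn_entropy_def set)
  also have "\<dots> = real (order (complex_of_real l1) (char_poly ?A)) * eta l1 + real (order (complex_of_real l2) (char_poly ?A)) * eta l2"
    using cl_facts l_facts l_facts2 by (simp add: eta_def)
  finally show ?thesis unfolding o1 o2 by simp
qed

lemma value_eq: "eta l1 + eta l2 = - (1/16) * (8 + sqrt 37) * log 2 ((1/16) * (8 + sqrt 37))
       - (1/16) * (8 - sqrt 37) * log 2 ((1/16) * (8 - sqrt 37))"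
  using l_facts unfolding eta_def by (simp add: l1_def l2_def)

lemma mult_mat_vec_idx: "A \<in> carrier_mat d d \<Longrightarrow> v \<in> carrier_vec d \<Longrightarrow> i < d \<Longrightarrow>
   (A *\<^sub>v v) $ i = (\<Sum>j<d. A $$ (i,j) * v $ j)"
  by (auto simp: scalar_prod_def atLeast0LessThan)

lemma rank1_eig:
  fixes c :: complex and u :: "nat \<Rightarrow> complex"
  assumes A: "A = mat d d (\<lambda>(i,j). c * (u i * cnj (u j)))"
    and norm: "c * (\<Sum>i<d. u i * cnj (u i)) = 1"
    and ev: "eigenvalue A e"
  shows "e = 0 \<or> e = 1"
proof (rule ccontr)
  assume ne: "\<not> (e = 0 \<or> e = 1)"
  from ev obtain v where v: "v \<in> carrier_vec d" "v \<noteq> 0\<^sub>v d" "A *\<^sub>v v = e \<cdot>\<^sub>v v"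
    unfolding eigenvalue_def eigenvector_def A by auto
  define s where "s = (\<Sum>j<d. cnj (u j) * v $ j)"
  have Ac: "A \<in> carrier_mat d d" unfolding A by simp
  have comp: "e * v $ i = c * u i * s" if i: "i < d" for i
  proof -
    have "e * v $ i = (A *\<^sub>v v) $ i" using v i by simp
    also have "\<dots> = (\<Sum>j<d. A $$ (i,j) * v $ j)" by (rule mult_mat_vec_idx[OF Ac v(1) i])
    also have "\<dots> = (\<Sum>j<d. c * u i * (cnj (u j) * v $ j))"
      by (rule sum.cong) (auto simp: A i)
    also have "\<dots> = c * u i * s" unfolding s_def by (simp add: sum_distrib_left)
    finally show ?thesis .
  qed
  have e0: "e \<noteq> 0" using ne by auto
  have vi: "v $ i = c * u i * s / e" if "i < d" for i using comp[OF that] e0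
    by (simp add: field_simps)
  have "(\<Sum>j<d. cnj (u j) * v $ j) = (\<Sum>j<d. cnj (u j) * (c * u j * s / e))"
    by (rule sum.cong) (auto simp: vi)
  then have "s = (\<Sum>j<d. cnj (u j) * (c * u j * s / e))"
    by (simp only: s_def[symmetric])
  also have "\<dots> = (\<Sum>j<d. (c * (u j * cnj (u j))) * s / e)"
    by (rule sum.cong) (simp_all add: mult_ac)
  also have "\<dots> = (c * (\<Sum>j<d. u j * cnj (u j))) * s / e"
    by (simp add: sum_distrib_left sum_distrib_right sum_divide_distrib)
  also have "\<dots> = s / e" using norm by simp
  finally have "s = s / e" .
  then have "s = 0" using ne e0 by (metis div_by_1 divide_cancel_left)
  then have "v $ i = 0" if "i < d" for i using vi[OF that] by simp
  then have "v = 0\<^sub>v d" using v(1) by (intro eq_vecI) auto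
  with v(2) show False by simp
qed

lemma rank1_entropy:
  fixes c :: complex and u :: "nat \<Rightarrow> complex"
  assumes A: "A = mat d d (\<lambda>(i,j). c * (u i * cnj (u j)))"
    and norm: "c * (\<Sum>i<d. u i * cnj (u i)) = 1"
  shows "vn_entropy A = 0"
  unfolding vn_entropy_def
proof (rule sum.neutral, rule ballI)
  fix e assume "e \<in> {ev. eigenvalue A ev}"
  then have "e = 0 \<or> e = 1" using rank1_eig[OF A norm] by auto
  then show "real (order e (char_poly A)) * eta (Re e) = 0" by (auto simp: eta_def)
qed

lemma sum_split_mult: "(\<Sum>l<n*k. f l) = (\<Sum>a<n. \<Sum>b<k. f (a*k+b :: nat)) " for f :: "nat \<Rightarrow> 'a::comm_monoid_add"
proof (induction n)
  case 0 then show ?case by simp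
next
  case (Suc n)
  have split: "(\<Sum>l<m+k. f l) = (\<Sum>l<m. f l) + (\<Sum>b<k. f (m+b))" for m
    by (induction k) (simp_all add: add.assoc)
  have "(\<Sum>l<Suc n*k. f l) = (\<Sum>l<n*k + k. f l)" by (simp add: add.commute)
  also have "\<dots> = (\<Sum>l<n*k. f l) + (\<Sum>b<k. f (n*k+b))" by (rule split)
  finally show ?case using Suc by simp
qed

lemma real_cs: fixes a s :: "nat \<Rightarrow> real"
  shows "(\<Sum>i<k. a i * s i)^2 \<le> (\<Sum>i<k. (a i)^2) * (\<Sum>i<k. (s i)^2)"
proof -
  let ?A = "\<Sum>i<k. (a i)^2" and ?S = "\<Sum>i<k. (s i)^2" and ?X = "\<Sum>i<k. a i * s i"
  have "0 \<le> (\<Sum>i<k. \<Sum>j<k. (a i * s j - a j * s i)^2)" by (intro sum_nonneg) auto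
  also have "\<dots> = (\<Sum>i<k. \<Sum>j<k. ((a i)^2 * (s j)^2 + (s i)^2 * (a j)^2) - 2 * ((a i * s i) * (a j * s j)))"
    by (intro sum.cong refl) (simp add: power2_eq_square algebra_simps)
  also have "\<dots> = (\<Sum>i<k. \<Sum>j<k. (a i)^2 * (s j)^2) + (\<Sum>i<k. \<Sum>j<k. (s i)^2 * (a j)^2) - 2 * (\<Sum>i<k. \<Sum>j<k. (a i * s i) * (a j * s j))"
    by (simp only: sum_subtractf sum.distrib sum_distrib_left)
  also have "\<dots> = ?A * ?S + ?S * ?A - 2 * (?X * ?X)"
    by (simp only: sum_product)
  finally have "0 \<le> ?A * ?S + ?S * ?A - 2 * (?X * ?X)" .
  then show ?thesis by (simp add: power2_eq_square)
qed

definition qf :: "nat \<Rightarrow> complex mat \<Rightarrow> (nat \<Rightarrow> complex) \<Rightarrow> (nat \<Rightarrow> complex) \<Rightarrow> complex" where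
  "qf n E x y = (\<Sum>i<n. \<Sum>j<n. cnj (x i) * E $$ (i,j) * y j)"

definition outer :: "nat \<Rightarrow> (nat \<Rightarrow> complex) \<Rightarrow> complex mat" where
  "outer N \<phi> = mat N N (\<lambda>(i,j). \<phi> i * cnj (\<phi> j))"

lemma psd_qf: "psd n E \<Longrightarrow> Im (qf n E x x) = 0 \<and> 0 \<le> Re (qf n E x x)"
  unfolding psd_def qf_def Let_def by blast

lemma psd_carrier: "psd n E \<Longrightarrow> E \<in> carrier_mat n n"
  unfolding psd_def by blast

lemma qf_scale: "qf n E (\<lambda>a. c * x a) (\<lambda>a. d * y a) = cnj c * d * qf n E x y"
  unfolding qf_def by (simp add: sum_distrib_left mult_ac)

lemma qf_expand: "qf n E (\<lambda>i. x i + complex_of_real t * y i) (\<lambda>i. x i + complex_of_real t * y i)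
   = qf n E x x + complex_of_real t * (qf n E x y + qf n E y x) + (complex_of_real t)^2 * qf n E y y"
proof -
  have "qf n E (\<lambda>i. x i + complex_of_real t * y i) (\<lambda>i. x i + complex_of_real t * y i)
     = (\<Sum>i<n. \<Sum>j<n. cnj (x i) * E $$ (i,j) * x j + (complex_of_real t * (cnj (x i) * E $$ (i,j) * y j)
          + complex_of_real t * (cnj (y i) * E $$ (i,j) * x j)) + (complex_of_real t)^2 * (cnj (y i) * E $$ (i,j) * y j))"
    unfolding qf_def by (intro sum.cong refl) (simp add: algebra_simps power2_eq_square)
  also have "\<dots> = qf n E x x + complex_of_real t * (qf n E x y + qf n E y x) + (complex_of_real t)^2 * qf n E y y"
    unfolding qf_def by (simp only: sum.distrib sum_distrib_left distrib_left)
  finally show ?thesis .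
qed

lemma qf_cs: assumes "psd n E"
  shows "Re (qf n E x y + qf n E y x) \<le> 2 * sqrt (Re (qf n E x x) * Re (qf n E y y))"
proof -
  define \<alpha> where "\<alpha> = Re (qf n E x x)"
  define \<beta> where "\<beta> = Re (qf n E y y)"
  define \<gamma> where "\<gamma> = Re (qf n E x y + qf n E y x)"
  have a0: "\<alpha> \<ge> 0" and b0: "\<beta> \<ge> 0" using psd_qf[OF assms] unfolding \<alpha>_def \<beta>_def by auto
  have h: "0 \<le> \<alpha> + t * \<gamma> + t^2 * \<beta>" for t :: real
  proof -
    have "0 \<le> Re (qf n E (\<lambda>i. x i + complex_of_real t * y i) (\<lambda>i. x i + complex_of_real t * y i))"
      using psd_qf[OF assms] by blast
    also have "\<dots> = \<alpha> + t * \<gamma> + t^2 * \<beta>"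
      unfolding qf_expand \<alpha>_def \<beta>_def \<gamma>_def
      by (simp flip: of_real_power)
    finally show ?thesis .
  qed
  have g2: "\<gamma>^2 \<le> 4 * \<alpha> * \<beta>"
  proof (cases "\<beta> = 0")
    case True
    have "\<gamma> = 0"
    proof (rule ccontr)
      assume "\<gamma> \<noteq> 0"
      have "0 \<le> \<alpha> + (- (\<alpha> + 1) / \<gamma>) * \<gamma> + (- (\<alpha> + 1) / \<gamma>)^2 * \<beta>" by (rule h)
      also have "\<dots> = -1" using \<open>\<gamma> \<noteq> 0\<close> True by simp
      finally show False by simp
    qed
    then show ?thesis using True by simp
  next
    case False
    then have bp: "\<beta> > 0" using b0 by simp
    have "0 \<le> \<alpha> + (- \<gamma> / (2*\<beta>)) * \<gamma> + (- \<gamma> / (2*\<beta>))^2 * \<beta>" by (rule h)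
    also have "\<dots> = (4 * \<alpha> * \<beta> - \<gamma>^2) / (4 * \<beta>)" using bp
      by (simp add: field_simps power2_eq_square)
    finally have "0 \<le> (4 * \<alpha> * \<beta> - \<gamma>^2) / (4 * \<beta>)" .
    then have "0 \<le> 4 * \<alpha> * \<beta> - \<gamma>^2" using bp by (simp add: zero_le_divide_iff)
    then show ?thesis by simp
  qed
  have "\<gamma> \<le> sqrt (\<gamma>^2)" by simp
  also have "\<dots> \<le> sqrt (4 * \<alpha> * \<beta>)" using g2 by (rule real_sqrt_le_mono)
  also have "\<dots> = 2 * sqrt (\<alpha> * \<beta>)" by (simp add: real_sqrt_mult)
  finally show ?thesis unfolding \<alpha>_def \<beta>_def \<gamma>_def .
qed

lemma idx_lt: "a < n \<Longrightarrow> b < k \<Longrightarrow> a * k + b < n * (k::nat)"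
proof -
  assume "a < n" "b < k"
  have "Suc a * k \<le> n * k" using \<open>a < n\<close> by (intro mult_le_mono1) simp
  then show ?thesis using \<open>b < k\<close> by simp
qed

lemma idx_div: "b < k \<Longrightarrow> (a * k + b) div k = (a::nat)" by simp
lemma idx_mod: "b < k \<Longrightarrow> (a * k + b) mod k = (b::nat)" by simp

lemma M_idx:
  assumes E: "E \<in> carrier_mat n n" and i: "i < n * k" and j: "j < n * k"
  shows "(kron_id n k E * outer (n*k) \<phi>) $$ (i,j)
     = (\<Sum>a'<n. E $$ (i div k, a') * \<phi> (a' * k + i mod k)) * cnj (\<phi> j)"
proof -
  have k: "0 < k" using i by (cases k) auto
  have im: "i mod k < k" using k by simp
  have "(kron_id n k E * outer (n*k) \<phi>) $$ (i,j)
      = (\<Sum>l<n*k. kron_id n k E $$ (i,l) * outer (n*k) \<phi> $$ (l,j))"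
    using i j by (simp add: kron_id_def outer_def scalar_prod_def atLeast0LessThan)
  also have "\<dots> = (\<Sum>a<n. \<Sum>b<k. kron_id n k E $$ (i,a*k+b) * outer (n*k) \<phi> $$ (a*k+b,j))"
    by (rule sum_split_mult)
  also have "\<dots> = (\<Sum>a<n. \<Sum>b<k. if b = i mod k then E $$ (i div k, a) * \<phi> (a*k+b) * cnj (\<phi> j) else 0)"
    using i j by (intro sum.cong refl) (auto simp: kron_id_def outer_def idx_lt)
  also have "\<dots> = (\<Sum>a<n. E $$ (i div k, a) * \<phi> (a*k + i mod k) * cnj (\<phi> j))"
    using im by (intro sum.cong refl) (simp add: sum.delta')
  also have "\<dots> = (\<Sum>a'<n. E $$ (i div k, a') * \<phi> (a' * k + i mod k)) * cnj (\<phi> j)"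
    by (simp add: sum_distrib_right)
  finally show ?thesis .
qed

definition ublk :: "nat \<Rightarrow> (nat \<Rightarrow> complex) \<Rightarrow> nat \<Rightarrow> nat \<Rightarrow> complex" where
  "ublk k \<phi> b a = \<phi> (a * k + b)"

lemma C_formula:
  assumes E: "E \<in> carrier_mat n n"
  shows "ptrace_X n k (kron_id n k E * outer (n*k) \<phi>)
     = mat k k (\<lambda>(b,b'). qf n E (ublk k \<phi> b') (ublk k \<phi> b))"
proof (rule eq_matI)
  fix b b' assume b: "b < dim_row (mat k k (\<lambda>(b,b'). qf n E (ublk k \<phi> b') (ublk k \<phi> b)))"
    and b': "b' < dim_col (mat k k (\<lambda>(b,b'). qf n E (ublk k \<phi> b') (ublk k \<phi> b)))"
  then have b: "b < k" and b': "b' < k" by auto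
  have "ptrace_X n k (kron_id n k E * outer (n*k) \<phi>) $$ (b,b')
     = (\<Sum>a<n. (kron_id n k E * outer (n*k) \<phi>) $$ (a*k+b, a*k+b'))"
    using b b' by (simp add: ptrace_X_def)
  also have "\<dots> = (\<Sum>a<n. (\<Sum>a'<n. E $$ (a, a') * \<phi> (a' * k + b)) * cnj (\<phi> (a*k+b')))"
    using b b' by (intro sum.cong refl) (simp add: M_idx[OF E] idx_lt)
  also have "\<dots> = qf n E (ublk k \<phi> b') (ublk k \<phi> b)"
    unfolding qf_def ublk_def by (intro sum.cong refl) (simp add: sum_distrib_right sum_distrib_left mult_ac)
  finally show "ptrace_X n k (kron_id n k E * outer (n*k) \<phi>) $$ (b,b') = mat k k (\<lambda>(b,b'). qf n E (ublk k \<phi> b') (ublk k \<phi> b)) $$ (b,b')"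
    using b b' by simp
qed (auto simp: ptrace_X_def)

lemma trace_formula:
  assumes E: "E \<in> carrier_mat n n"
  shows "mtrace (kron_id n k E * outer (n*k) \<phi>) = (\<Sum>b<k. qf n E (ublk k \<phi> b) (ublk k \<phi> b))"
proof -
  have "mtrace (kron_id n k E * outer (n*k) \<phi>) = (\<Sum>i<n*k. (kron_id n k E * outer (n*k) \<phi>) $$ (i,i))"
    by (simp add: mtrace_def kron_id_def)
  also have "\<dots> = (\<Sum>a<n. \<Sum>b<k. (kron_id n k E * outer (n*k) \<phi>) $$ (a*k+b,a*k+b))"
    by (rule sum_split_mult)
  also have "\<dots> = (\<Sum>b<k. \<Sum>a<n. (kron_id n k E * outer (n*k) \<phi>) $$ (a*k+b,a*k+b))"
    by (rule sum.swap)
  also have "\<dots> = (\<Sum>b<k. ptrace_X n k (kron_id n k E * outer (n*k) \<phi>) $$ (b,b))"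
    by (intro sum.cong refl) (simp add: ptrace_X_def)
  also have "\<dots> = (\<Sum>b<k. qf n E (ublk k \<phi> b) (ublk k \<phi> b))"
    by (intro sum.cong refl) (simp add: C_formula[OF E])
  finally show ?thesis .
qed

lemma eta_nonneg: "x \<le> 1 \<Longrightarrow> 0 \<le> eta x"
  unfolding eta_def by (auto simp: mult_nonneg_nonpos)

lemma eig_le1:
  fixes u :: "nat \<Rightarrow> nat \<Rightarrow> complex"
  assumes psd: "psd n E"
    and p: "p = Re (\<Sum>b<k. qf n E (u b) (u b))" and pp: "p > 0"
    and ev: "eigenvalue (complex_of_real (1/p) \<cdot>\<^sub>m mat k k (\<lambda>(b,b'). qf n E (u b') (u b))) e"
  shows "Re e \<le> 1"
proof -
  let ?D = "complex_of_real (1/p) \<cdot>\<^sub>m mat k k (\<lambda>(b,b'). qf n E (u b') (u b))"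
  have Dc: "?D \<in> carrier_mat k k" by simp
  from ev obtain v where v: "v \<in> carrier_vec k" "v \<noteq> 0\<^sub>v k" "?D *\<^sub>v v = e \<cdot>\<^sub>v v"
    unfolding eigenvalue_def eigenvector_def by auto
  define T where "T b = Re (qf n E (u b) (u b))" for b
  have T0: "T b \<ge> 0" for b unfolding T_def using psd_qf[OF psd] by blast
  have pT: "p = (\<Sum>b<k. T b)" unfolding p T_def by simp
  define y where "y b = (\<lambda>a. cnj (v $ b) * u b a)" for b
  define Nr where "Nr = (\<Sum>b<k. (cmod (v $ b))^2)"
  define Q where "Q b = Re (qf n E (y b) (y b))" for b
  have Q: "Q b = (cmod (v $ b))^2 * T b" for b
  proof -
    have "qf n E (y b) (y b) = cnj (cnj (v $ b)) * cnj (v $ b) * qf n E (u b) (u b)"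
      unfolding y_def by (rule qf_scale)
    also have "cnj (cnj (v $ b)) * cnj (v $ b) = complex_of_real ((cmod (v $ b))^2)"
      by (simp only: complex_cnj_cnj complex_mult_cnj cmod_power2)
    finally show ?thesis unfolding Q_def T_def by simp
  qed
  have sqQ: "sqrt (Q b) = cmod (v $ b) * sqrt (T b)" for b
    unfolding Q by (simp add: real_sqrt_mult)
  have comp: "e * v $ b = (\<Sum>b'<k. complex_of_real (1/p) * qf n E (u b') (u b) * v $ b')" if b: "b < k" for b
  proof -
    have "e * v $ b = (?D *\<^sub>v v) $ b" using v b by simp
    also have "\<dots> = (\<Sum>b'<k. ?D $$ (b,b') * v $ b')" by (rule mult_mat_vec_idx[OF Dc v(1) b])
    also have "\<dots> = (\<Sum>b'<k. complex_of_real (1/p) * qf n E (u b') (u b) * v $ b')"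
      using b by (intro sum.cong refl) simp
    finally show ?thesis .
  qed
  have eN: "e * (\<Sum>b<k. cnj (v $ b) * v $ b) = complex_of_real (1/p) * (\<Sum>b<k. \<Sum>b'<k. qf n E (y b') (y b))"
  proof -
    have "e * (\<Sum>b<k. cnj (v $ b) * v $ b) = (\<Sum>b<k. cnj (v $ b) * (e * v $ b))"
      by (simp add: sum_distrib_left mult_ac)
    also have "\<dots> = (\<Sum>b<k. cnj (v $ b) * (\<Sum>b'<k. complex_of_real (1/p) * qf n E (u b') (u b) * v $ b'))"
      by (intro sum.cong refl) (simp add: comp)
    also have "\<dots> = (\<Sum>b<k. \<Sum>b'<k. complex_of_real (1/p) * qf n E (y b') (y b))"
      unfolding y_def qf_scale by (intro sum.cong refl) (simp add: sum_distrib_left mult_ac)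
    also have "\<dots> = complex_of_real (1/p) * (\<Sum>b<k. \<Sum>b'<k. qf n E (y b') (y b))"
      by (simp add: sum_distrib_left)
    finally show ?thesis .
  qed
  have N: "(\<Sum>b<k. cnj (v $ b) * v $ b) = complex_of_real Nr"
  proof -
    have "(\<Sum>b<k. cnj (v $ b) * v $ b) = (\<Sum>b<k. complex_of_real ((cmod (v $ b))^2))"
      by (intro sum.cong refl) (simp only: mult.commute[of "cnj _"] complex_mult_cnj cmod_power2)
    then show ?thesis unfolding Nr_def by simp
  qed
  have Npos: "Nr > 0"
  proof -
    obtain b where b: "b < k" "v $ b \<noteq> 0"
      using v(1,2) by (metis dim_vec eq_vecI index_zero_vec(1) index_zero_vec(2) carrier_vecD)
    have "(cmod (v $ b))^2 \<le> Nr" unfolding Nr_def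
      by (rule member_le_sum) (use b in auto)
    moreover have "(cmod (v $ b))^2 > 0" using b by simp
    ultimately show ?thesis by linarith
  qed
  define S where "S = (\<Sum>b<k. \<Sum>b'<k. Re (qf n E (y b') (y b)))"
  have ReeN: "Re e * Nr = (1/p) * S"
  proof -
    have "Re (e * complex_of_real Nr) = Re (complex_of_real (1/p) * (\<Sum>b<k. \<Sum>b'<k. qf n E (y b') (y b)))"
      using eN N by simp
    then show ?thesis unfolding S_def by simp
  qed
  have S_swap: "S = (\<Sum>b<k. \<Sum>b'<k. Re (qf n E (y b) (y b')))"
    unfolding S_def by (rule sum.swap)
  have "2 * S = (\<Sum>b<k. \<Sum>b'<k. Re (qf n E (y b') (y b) + qf n E (y b) (y b')))"
  proof -
    have "(\<Sum>b<k. \<Sum>b'<k. Re (qf n E (y b') (y b) + qf n E (y b) (y b')))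
        = S + (\<Sum>b<k. \<Sum>b'<k. Re (qf n E (y b) (y b')))"
      unfolding S_def by (simp add: sum.distrib)
    then show ?thesis using S_swap by simp
  qed
  also have "\<dots> \<le> (\<Sum>b<k. \<Sum>b'<k. 2 * sqrt (Q b' * Q b))"
    unfolding Q_def by (intro sum_mono qf_cs[OF psd])
  also have "\<dots> = 2 * ((\<Sum>b<k. sqrt (Q b)) * (\<Sum>b<k. sqrt (Q b)))"
    by (simp add: sum_product real_sqrt_mult sum_distrib_left mult_ac)
  finally have S_le: "S \<le> (\<Sum>b<k. sqrt (Q b))^2" by (simp add: power2_eq_square)
  also have "\<dots> = (\<Sum>b<k. cmod (v $ b) * sqrt (T b))^2" by (simp add: sqQ)
  also have "\<dots> \<le> (\<Sum>b<k. (cmod (v $ b))^2) * (\<Sum>b<k. (sqrt (T b))^2)" by (rule real_cs)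
  also have "\<dots> = Nr * p" unfolding Nr_def pT using T0 by simp
  finally have "S \<le> Nr * p" .
  then have "p * (Re e * Nr) \<le> p * Nr" using ReeN pp by (simp add: field_simps)
  then have "Re e * Nr \<le> Nr" using pp by (simp add: mult_le_cancel_left_pos)
  then show ?thesis using Npos by simp
qed

lemma term_nonneg:
  assumes psd: "psd n E"
  shows "0 \<le> (let M = kron_id n k E * outer (n*k) \<phi>; p = Re (mtrace M)
             in p * vn_entropy (complex_of_real (1 / p) \<cdot>\<^sub>m ptrace_X n k M))"
proof -
  have E: "E \<in> carrier_mat n n" by (rule psd_carrier[OF psd])
  define p where "p = Re (\<Sum>b<k. qf n E (ublk k \<phi> b) (ublk k \<phi> b))"
  have p0: "p \<ge> 0" unfolding p_def using psd_qf[OF psd] by (simp add: sum_nonneg)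
  have ent: "0 \<le> vn_entropy (complex_of_real (1/p) \<cdot>\<^sub>m mat k k (\<lambda>(b,b'). qf n E (ublk k \<phi> b') (ublk k \<phi> b)))"
    if pp: "p > 0"
    unfolding vn_entropy_def
  proof (rule sum_nonneg)
    fix e assume "e \<in> {ev. eigenvalue (complex_of_real (1/p) \<cdot>\<^sub>m mat k k (\<lambda>(b,b'). qf n E (ublk k \<phi> b') (ublk k \<phi> b))) ev}"
    then have "Re e \<le> 1" using eig_le1[OF psd p_def pp] by auto
    then show "0 \<le> real (order e (char_poly (complex_of_real (1/p) \<cdot>\<^sub>m mat k k (\<lambda>(b,b'). qf n E (ublk k \<phi> b') (ublk k \<phi> b))))) * eta (Re e)"
      by (simp add: eta_nonneg)
  qed
  show ?thesis
    unfolding Let_def C_formula[OF E] trace_formula[OF E] p_def[symmetric]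
    using p0 ent by (cases "p = 0") auto
qed

definition unitE :: "nat \<Rightarrow> nat \<Rightarrow> complex mat" where
  "unitE n a = mat n n (\<lambda>(i,j). if i = a \<and> j = a then 1 else 0)"

lemma qf_unit: "a < n \<Longrightarrow> qf n (unitE n a) x y = cnj (x a) * y a"
proof -
  assume a: "a < n"
  have "qf n (unitE n a) x y = (\<Sum>i<n. if i = a then cnj (x a) * y a else 0)"
    unfolding qf_def
  proof (intro sum.cong refl)
    fix i assume i: "i \<in> {..<n}"
    have "(\<Sum>j<n. cnj (x i) * unitE n a $$ (i, j) * y j) = (\<Sum>j<n. if j = a then (if i = a then cnj (x a) * y a else 0) else 0)"
      using i a by (intro sum.cong refl) (auto simp: unitE_def)
    also have "\<dots> = (if i = a then cnj (x a) * y a else 0)" using a by simp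
    finally show "(\<Sum>j<n. cnj (x i) * unitE n a $$ (i, j) * y j) = (if i = a then cnj (x a) * y a else 0)" .
  qed
  also have "\<dots> = cnj (x a) * y a" using a by simp
  finally show ?thesis .
qed

lemma unit_povm: "is_povm n n (unitE n)"
  unfolding is_povm_def
proof (intro conjI allI impI)
  fix a assume a: "a < n"
  show "psd n (unitE n a)"
    unfolding psd_def Let_def
  proof (intro conjI allI)
    show "unitE n a \<in> carrier_mat n n" by (simp add: unitE_def)
    fix v :: "nat \<Rightarrow> complex"
    have q: "(\<Sum>i<n. \<Sum>j<n. cnj (v i) * unitE n a $$ (i, j) * v j) = complex_of_real ((cmod (v a))^2)"
      using qf_unit[OF a, of v v] unfolding qf_def
      by (simp add: mult.commute[of "cnj _"] complex_mult_cnj cmod_power2)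
    show "Im (\<Sum>i<n. \<Sum>j<n. cnj (v i) * unitE n a $$ (i, j) * v j) = 0" unfolding q by simp
    show "0 \<le> Re (\<Sum>i<n. \<Sum>j<n. cnj (v i) * unitE n a $$ (i, j) * v j)" unfolding q by simp
  qed
next
  fix i j assume i: "i < n" and j: "j < n"
  have "(\<Sum>a<n. unitE n a $$ (i, j)) = (\<Sum>a<n. if a = i then (if i = j then 1 else 0) else 0)"
    using i j by (intro sum.cong refl) (auto simp: unitE_def)
  also have "\<dots> = (if i = j then 1 else 0)" using i by simp
  finally show "(\<Sum>a<n. unitE n a $$ (i, j)) = (if i = j then 1 else 0)" .
qed

lemma unit_term_zero:
  assumes a: "a < n"
  shows "(let M = kron_id n k (unitE n a) * outer (n*k) \<phi>; p = Re (mtrace M)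
             in p * vn_entropy (complex_of_real (1 / p) \<cdot>\<^sub>m ptrace_X n k M)) = 0"
proof -
  have E: "unitE n a \<in> carrier_mat n n" by (simp add: unitE_def)
  define w where "w b = \<phi> (a * k + b)" for b
  define p where "p = (\<Sum>b<k. (cmod (w b))^2)"
  have tr: "(\<Sum>b<k. qf n (unitE n a) (ublk k \<phi> b) (ublk k \<phi> b)) = complex_of_real p"
  proof -
    have "(\<Sum>b<k. qf n (unitE n a) (ublk k \<phi> b) (ublk k \<phi> b)) = (\<Sum>b<k. complex_of_real ((cmod (w b))^2))"
      by (intro sum.cong refl) (simp add: qf_unit[OF a] ublk_def w_def mult.commute[of "cnj _"] complex_mult_cnj cmod_power2)
    then show ?thesis unfolding p_def by simp
  qed
  have Ceq: "mat k k (\<lambda>(b,b'). qf n (unitE n a) (ublk k \<phi> b') (ublk k \<phi> b)) = mat k k (\<lambda>(b,b'). w b * cnj (w b'))"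
    by (rule eq_matI) (auto simp: qf_unit[OF a] ublk_def w_def)
  show ?thesis
  proof (cases "p = 0")
    case True
    then show ?thesis unfolding Let_def C_formula[OF E] trace_formula[OF E] tr by simp
  next
    case False
    have D: "complex_of_real (1/p) \<cdot>\<^sub>m mat k k (\<lambda>(b,b'). w b * cnj (w b'))
        = mat k k (\<lambda>(i,j). complex_of_real (1/p) * (w i * cnj (w j)))"
      by (rule eq_matI) auto
    have nrm: "complex_of_real (1/p) * (\<Sum>i<k. w i * cnj (w i)) = 1"
    proof -
      have "(\<Sum>i<k. w i * cnj (w i)) = complex_of_real p" unfolding p_def
        by (simp add: complex_mult_cnj cmod_power2)
      then show ?thesis using False by simp
    qed
    have "vn_entropy (complex_of_real (1/p) \<cdot>\<^sub>m mat k k (\<lambda>(b,b'). w b * cnj (w b'))) = 0"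
      unfolding D by (rule rank1_entropy[OF refl nrm])
    then show ?thesis unfolding Let_def C_formula[OF E] trace_formula[OF E] tr Ceq by simp
  qed
qed

lemma discord_pure:
  assumes R: "R = outer (n*k) \<phi>" and nrm: "(\<Sum>i<n*k. \<phi> i * cnj (\<phi> i)) = 1"
  shows "discord n k R = vn_entropy (ptrace_Y n k R)"
proof -
  let ?f = "\<lambda>mE. meas_cond_entropy n k R (fst mE) (snd mE)"
  let ?X = "?f ` {(m, E). is_povm n m E}"
  have mem: "0 \<in> ?X"
  proof
    show "(n, unitE n) \<in> {(m, E). is_povm n m E}" using unit_povm by simp
    show "0 = ?f (n, unitE n)"
      unfolding meas_cond_entropy_def R using unit_term_zero by simp
  qed
  have lb: "\<forall>y\<in>?X. 0 \<le> y"
  proof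
    fix y assume "y \<in> ?X"
    then obtain m E where mE: "is_povm n m E" and y: "y = meas_cond_entropy n k R m E" by auto
    show "0 \<le> y" unfolding y meas_cond_entropy_def R
      using mE unfolding is_povm_def by (intro sum_nonneg term_nonneg) auto
  qed
  have inf: "(INF mE \<in> {(m, E). is_povm n m E}. ?f mE) = 0"
    by (rule cInf_eq_minimum[OF mem]) (use lb in auto)
  have vR: "vn_entropy R = 0"
    by (rule rank1_entropy[of R "n*k" 1 \<phi>]) (use nrm in \<open>auto simp: R outer_def\<close>)
  show ?thesis unfolding discord_def inf vR by simp
qed

lemma sum3: "(\<Sum>k<3. f k) = f 0 + f 1 + (f 2 :: nat)" for f :: "nat \<Rightarrow> nat"
  by (simp add: eval_nat_numeral)
lemma old_index_expl: "old_index ord i = (i div 4 mod 2) * 2^(2 - ord!0) + (i div 2 mod 2) * 2^(2 - ord!1) + (i mod 2) * 2^(2 - ord!2)"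
  unfolding old_index_def sum3 by simp

lemma old_index_ok:
  assumes "ord \<in> {[0,1,2],[1,0,2],[2,0,1],[0,2,1],[1,2,0]}" and "i < 8"
  shows "old_index ord i < 8 \<and> sg (old_index ord i) = sg i"
proof -
  have "i \<in> {0,1,2,3,4,5,6,7}" using assms(2) by auto
  then show ?thesis using assms(1)
    by (auto simp: old_index_expl sg_def)
qed

lemma reorder_rho3:
  assumes "ord \<in> {[0,1,2],[1,0,2],[2,0,1],[0,2,1],[1,2,0]}"
  shows "reorder ord rho3 = rho3"
proof (rule eq_matI)
  fix i j assume i: "i < dim_row rho3" and j: "j < dim_col rho3"
  then have i8: "i < 8" and j8: "j < 8" by (auto simp: rho3_def)
  show "reorder ord rho3 $$ (i, j) = rho3 $$ (i, j)"
    using old_index_ok[OF assms i8] old_index_ok[OF assms j8] i8 j8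
    by (simp add: reorder_def rho3_idx)
qed (auto simp: reorder_def rho3_def)

lemma rho3_outer: "rho3 = outer (2*4) (\<lambda>i. psi3 $ i)" "rho3 = outer (4*2) (\<lambda>i. psi3 $ i)"
  by (simp_all add: rho3_def outer_def)

lemma psi3_norm: "(\<Sum>i<n. psi3 $ i * cnj (psi3 $ i)) = 1" if "n = 8"
proof -
  have "(\<Sum>i<8. psi3 $ i * cnj (psi3 $ i)) = (\<Sum>i<8. complex_of_real (sg i * sg i / 32))"
    by (intro sum.cong refl) (simp add: psi_prod)
  also have "\<dots> = 1" by (simp add: eval_nat_numeral sg_def)
  finally show ?thesis using that by simp
qed

lemma dA: "discord 2 4 rho3 = eta l1 + eta l2"
  using discord_pure[OF rho3_outer(1) psi3_norm] vnA by simp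
lemma dAB: "discord 4 2 rho3 = eta l1 + eta l2"
  using discord_pure[OF rho3_outer(2) psi3_norm] vnAB by simp

theorem lemma3:
  shows "discord 2 4 (reorder [0,1,2] rho3) = discord 2 4 (reorder [1,0,2] rho3)
   \<and> discord 2 4 (reorder [1,0,2] rho3) = discord 2 4 (reorder [2,0,1] rho3)
   \<and> discord 2 4 (reorder [2,0,1] rho3) = discord 4 2 (reorder [0,1,2] rho3)
   \<and> discord 4 2 (reorder [0,1,2] rho3) = discord 4 2 (reorder [0,2,1] rho3)
   \<and> discord 4 2 (reorder [0,2,1] rho3) = discord 4 2 (reorder [1,2,0] rho3)
   \<and> discord 4 2 (reorder [1,2,0] rho3) =
       - (1/16) * (8 + sqrt 37) * log 2 ((1/16) * (8 + sqrt 37))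
       - (1/16) * (8 - sqrt 37) * log 2 ((1/16) * (8 - sqrt 37))
   \<and> discord 2 4 (reorder [0,1,2] rho3) = vn_entropy (ptrace_Y 2 4 rho3)
   \<and> discord 4 2 (reorder [0,1,2] rho3) = vn_entropy (ptrace_Y 4 2 rho3)"
  by (simp add: reorder_rho3 dA dAB vnA vnAB value_eq)

end
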